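(* Consider the stochastic quadratic problem in the context, and let $\eta_0,\dots,\eta_T$ be any deterministic learning rates. Run SGD $w_{t+1}=w_t-\eta_t(H(\xi_t)w_t-b(\xi_t))$ for $t=0,\dots,T$ from a deterministic $w_0$. With $P_t=I-\eta_tH$, $$\mathbb{E}\left[(w_{T+1}-w_* )^\top H(w_{T+1}-w_* )\right]=\mathbb{E}\left[(w_0-w_* )^\top P_T\cdots P_0HP_0\cdots P_T(w_0-w_* )\right]+\sum_{\tau=0}^T\mathbb{E}\left[\eta_\tau^2\,n_\tau^\top P_T\cdots P_{\tau+1}HP_{\tau+1}\cdots P_T\,n_\tau\right].$$
   Context: Let $\xi$ be a random data sample, $H(\xi)\in\mathbb{R}^{d\times d}$ a random symmetric matrix and $b(\xi)\in\mathbb{R}^d$ a random vector. Define $f(w,\xi)=\frac12w^\top H(\xi)w-b(\xi)^\top w$ and $f(w)=\mathbb{E}_\xi f(w,\xi)$. Set $H=\mathbb{E}H(\xi)$, assumed positive definite, and $b=\mathbb{E}b(\xi)$, with $w_*=H^{-1}b$. The samples $\xi_0,\xi_1,\dots$ are i.i.d. copies of $\xi$, and $n_t=(Hw_t-b)-(H(\xi_t)w_t-b(\xi_t))$. *)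

theory Defs
  imports "HOL-Probability.Probability"
begin

text \<open>SGD iterate w_t as a function of the sample path omega (omega t = xi_t).\<close>
primrec sgd_iter :: "('s \<Rightarrow> real^'n^'n) \<Rightarrow> ('s \<Rightarrow> real^'n) \<Rightarrow> (nat \<Rightarrow> real)
    \<Rightarrow> real^'n \<Rightarrow> (nat \<Rightarrow> 's) \<Rightarrow> nat \<Rightarrow> real^'n" where
  "sgd_iter Hs bs eta w0 \<omega> 0 = w0"
| "sgd_iter Hs bs eta w0 \<omega> (Suc t) =
     sgd_iter Hs bs eta w0 \<omega> t
     - eta t *\<^sub>R (Hs (\<omega> t) *v sgd_iter Hs bs eta w0 \<omega> t - bs (\<omega> t))"

definition Pmat :: "real^'n^'n \<Rightarrow> (nat \<Rightarrow> real) \<Rightarrow> nat \<Rightarrow> real^'n^'n" where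
  "Pmat H eta t = mat 1 - eta t *\<^sub>R H"

primrec Pprod :: "real^'n^'n \<Rightarrow> (nat \<Rightarrow> real) \<Rightarrow> nat \<Rightarrow> nat \<Rightarrow> real^'n^'n" where
  "Pprod H eta a 0 = mat 1"
| "Pprod H eta a (Suc n) = Pmat H eta (a + n) ** Pprod H eta a n"

primrec Pprod_rev :: "real^'n^'n \<Rightarrow> (nat \<Rightarrow> real) \<Rightarrow> nat \<Rightarrow> nat \<Rightarrow> real^'n^'n" where
  "Pprod_rev H eta a 0 = mat 1"
| "Pprod_rev H eta a (Suc n) = Pprod_rev H eta a n ** Pmat H eta (a + n)"

definition noise :: "('s \<Rightarrow> real^'n^'n) \<Rightarrow> ('s \<Rightarrow> real^'n) \<Rightarrow> real^'n^'n \<Rightarrow> real^'n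
    \<Rightarrow> (nat \<Rightarrow> real) \<Rightarrow> real^'n \<Rightarrow> (nat \<Rightarrow> 's) \<Rightarrow> nat \<Rightarrow> real^'n" where
  "noise Hs bs H b eta w0 \<omega> t =
     (H *v sgd_iter Hs bs eta w0 \<omega> t - b)
     - (Hs (\<omega> t) *v sgd_iter Hs bs eta w0 \<omega> t - bs (\<omega> t))"

end

theory Submission
  imports Defs
begin


lemma mv_bil: "bilinear ((*v) :: real^'n^'m \<Rightarrow> real^'n \<Rightarrow> real^'m)"
  unfolding bilinear_def
  by (auto intro!: linearI simp: matrix_vector_right_distrib matrix_vector_mult_add_rdistrib
     matrix_vector_mult_scaleR scaleR_matrix_vector_assoc)

lemma mv_bbil: "bounded_bilinear ((*v) :: real^'n^'m \<Rightarrow> real^'n \<Rightarrow> real^'m)"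
  using mv_bil bilinear_conv_bounded_bilinear by blast

lemma mv_meas[measurable]:
  fixes f :: "'a \<Rightarrow> real^'n^'m" and g :: "'a \<Rightarrow> real^'n"
  assumes "f \<in> borel_measurable M" "g \<in> borel_measurable M"
  shows "(\<lambda>x. f x *v g x) \<in> borel_measurable M"
  using assms(1,2) apply (rule borel_measurable_continuous_Pair)
  by (intro bounded_bilinear.continuous_on[OF mv_bbil] continuous_intros)

lemma mv_norm:
  fixes A :: "real^'n^'m"
  shows "norm (A *v x) \<le> real CARD('m) * real CARD('n) * norm A * norm x"
proof -
  have "onorm ((*v) A) \<le> real CARD('m) * real CARD('n) * norm A"
    by (rule onorm_le_matrix_component) (rule order_trans[OF component_le_norm_cart Finite_Cartesian_Product.norm_nth_le])
  moreover have "norm (A *v x) \<le> onorm ((*v) A) * norm x"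
    by (rule onorm[OF matrix_vector_mul_bounded_linear])
  ultimately show ?thesis by (meson mult_right_mono norm_ge_zero order_trans)
qed

lemma quad_bound:
  fixes M :: "real^'n^'n"
  shows "\<bar>x \<bullet> (M *v y)\<bar> \<le> real CARD('n) * real CARD('n) * norm M * ((norm x)\<^sup>2 + (norm y)\<^sup>2)"
proof -
  let ?K = "real CARD('n) * real CARD('n) * norm M"
  have K: "?K \<ge> 0" by simp
  have "\<bar>x \<bullet> (M *v y)\<bar> \<le> norm x * norm (M *v y)" by (rule Cauchy_Schwarz_ineq2)
  also have "\<dots> \<le> norm x * (?K * norm y)"
    using mv_norm[of M y] by (simp add: mult_left_mono)
  also have "\<dots> = ?K * (norm x * norm y)" by simp
  also have "\<dots> \<le> ?K * ((norm x)\<^sup>2 + (norm y)\<^sup>2)"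
  proof (rule mult_left_mono[OF _ K])
    have "0 \<le> (norm x - norm y) * (norm x - norm y)" by simp
    then have h1: "2 * (norm x * norm y) \<le> norm x * norm x + norm y * norm y"
      by (simp add: algebra_simps)
    have h2: "0 \<le> norm x * norm y" by simp
    show "norm x * norm y \<le> (norm x)\<^sup>2 + (norm y)\<^sup>2"
      unfolding power2_eq_square using h1 h2 by linarith
  qed
  finally show ?thesis .
qed

lemma sq4:
  fixes x1 x2 x3 x4 :: real
  shows "(x1 + x2 + x3 + x4)\<^sup>2 \<le> 4 * (x1\<^sup>2 + x2\<^sup>2 + x3\<^sup>2 + x4\<^sup>2)"
proof -
  have "4 * (x1\<^sup>2 + x2\<^sup>2 + x3\<^sup>2 + x4\<^sup>2) - (x1 + x2 + x3 + x4)\<^sup>2 =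
    (x1-x2)\<^sup>2 + (x1-x3)\<^sup>2 + (x1-x4)\<^sup>2 + (x2-x3)\<^sup>2 + (x2-x4)\<^sup>2 + (x3-x4)\<^sup>2"
    by (simp add: power2_eq_square algebra_simps)
  moreover have "0 \<le> (x1-x2)\<^sup>2 + (x1-x3)\<^sup>2 + (x1-x4)\<^sup>2 + (x2-x3)\<^sup>2 + (x2-x4)\<^sup>2 + (x3-x4)\<^sup>2"
    by simp
  ultimately show ?thesis by linarith
qed

lemma tr_inner:
  fixes P :: "real^'n^'n"
  shows "(P *v x) \<bullet> y = x \<bullet> (transpose P *v y)"
  by (simp add: dot_lmul_matrix[symmetric] inner_commute)

lemma sgd_local:
  "(\<And>s. s < t \<Longrightarrow> om s = om' s) \<Longrightarrow> sgd_iter Hs bs eta w0 om t = sgd_iter Hs bs eta w0 om' t"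
  by (induction t) auto

lemma sgd_upd: "t \<le> s \<Longrightarrow> sgd_iter Hs bs eta w0 (om(s := y)) t = sgd_iter Hs bs eta w0 om t"
  by (rule sgd_local) auto

lemma Pmv: "Pmat H eta t *v x = x - eta t *\<^sub>R (H *v x)"
  by (simp add: Pmat_def matrix_vector_mult_diff_rdistrib scaleR_matrix_vector_assoc)

lemma Pcomm: "Pmat H eta i ** Pmat H eta j = Pmat H eta j ** Pmat H eta i"
proof -
  have "(Pmat H eta i ** Pmat H eta j) *v x = (Pmat H eta j ** Pmat H eta i) *v x" for x
  proof -
    have "(Pmat H eta i ** Pmat H eta j) *v x = Pmat H eta i *v (Pmat H eta j *v x)"
      by (simp only: matrix_vector_mul_assoc)
    also have "\<dots> = x - eta i *\<^sub>R (H *v x) - eta j *\<^sub>R (H *v x) + (eta i * eta j) *\<^sub>R (H *v (H *v x))"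
      unfolding Pmv matrix_vector_mult_diff_distrib matrix_vector_mult_scaleR
      by (simp add: algebra_simps)
    also have "\<dots> = Pmat H eta j *v (Pmat H eta i *v x)"
      unfolding Pmv matrix_vector_mult_diff_distrib matrix_vector_mult_scaleR
      by (simp add: algebra_simps)
    also have "\<dots> = (Pmat H eta j ** Pmat H eta i) *v x"
      by (simp only: matrix_vector_mul_assoc)
    finally show ?thesis .
  qed
  then show ?thesis by (simp add: matrix_eq)
qed

lemma Pprod_comm: "Pmat H eta j ** Pprod H eta a n = Pprod H eta a n ** Pmat H eta j"
proof (induction n)
  case (Suc n)
  have "Pmat H eta j ** Pprod H eta a (Suc n) = (Pmat H eta j ** Pmat H eta (a+n)) ** Pprod H eta a n"
    by (simp add: matrix_mul_assoc)
  also have "\<dots> = Pmat H eta (a+n) ** (Pmat H eta j ** Pprod H eta a n)"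
    by (simp only: Pcomm[of H eta j] matrix_mul_assoc)
  also have "\<dots> = Pprod H eta a (Suc n) ** Pmat H eta j"
    by (simp only: Suc.IH matrix_mul_assoc Pprod.simps)
  finally show ?case .
qed simp

lemma Pprod_rev_eq: "Pprod_rev H eta a n = Pprod H eta a n"
  by (induction n) (simp_all add: Pprod_comm)

lemma Psym: "transpose H = H \<Longrightarrow> transpose (Pmat H eta t) = Pmat H eta t"
  by (simp add: Pmat_def transpose_def vec_eq_iff mat_def)

lemma Pprod_tr: "transpose H = H \<Longrightarrow> transpose (Pprod H eta a n) = Pprod_rev H eta a n"
  by (induction n) (simp_all add: matrix_transpose_mul Psym)



lemma le_1_sq: "(r::real) \<le> 1 + r * r"
proof -
  have "0 \<le> (r - 1) * (r - 1)" by simp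
  then have h1: "2 * r \<le> 1 + r * r" by (simp add: algebra_simps)
  have h2: "0 \<le> r * r" by simp
  from h1 h2 show ?thesis by linarith
qed

locale sgd_setup =
  fixes D :: "'s measure" and Hs :: "'s \<Rightarrow> real^'n^'n" and bs :: "'s \<Rightarrow> real^'n"
    and H :: "real^'n^'n" and b :: "real^'n" and wstar :: "real^'n"
    and eta :: "nat \<Rightarrow> real" and w0 :: "real^'n" and T :: nat
  assumes D: "prob_space D"
    and Hsm: "Hs \<in> borel_measurable D" and bsm: "bs \<in> borel_measurable D"
    and Hs2: "integrable D (\<lambda>x. (norm (Hs x))\<^sup>2)"
    and bs2: "integrable D (\<lambda>x. (norm (bs x))\<^sup>2)"
    and Hsym: "\<And>x. transpose (Hs x) = Hs x"
    and Hdef: "H = (\<integral>x. Hs x \<partial>D)" and bdef: "b = (\<integral>x. bs x \<partial>D)"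
    and Hpd: "\<And>v. v \<noteq> 0 \<Longrightarrow> v \<bullet> (H *v v) > 0"
    and wdef: "wstar = matrix_inv H *v b"
begin

sublocale DP: prob_space D by (rule D)

sublocale P: product_sigma_finite "\<lambda>_::nat. D"
  unfolding product_sigma_finite_def by (simp add: prob_space_imp_sigma_finite D)

abbreviation "Om \<equiv> PiM {0..T} (\<lambda>_. D)"

lemma Om_prob: "prob_space Om" by (rule prob_space_PiM) (rule D)

lemma comp_meas: "t \<le> T \<Longrightarrow> (\<lambda>om. om t) \<in> Om \<rightarrow>\<^sub>M D"
  by (rule measurable_component_singleton) simp

lemma Hs_t_meas: "t \<le> T \<Longrightarrow> (\<lambda>om. Hs (om t)) \<in> borel_measurable Om"
  using measurable_compose[OF comp_meas Hsm] .

lemma bs_t_meas: "t \<le> T \<Longrightarrow> (\<lambda>om. bs (om t)) \<in> borel_measurable Om"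
  using measurable_compose[OF comp_meas bsm] .

lemma w_meas: "t \<le> Suc T \<Longrightarrow> (\<lambda>om. sgd_iter Hs bs eta w0 om t) \<in> borel_measurable Om"
proof (induction t)
  case (Suc t)
  then have tT: "t \<le> T" by simp
  note [measurable] = Suc.IH[OF Suc_leD[OF Suc.prems]] Hs_t_meas[OF tT] bs_t_meas[OF tT]
  show ?case by simp measurable
qed simp

lemma nz_meas: "t \<le> T \<Longrightarrow> (\<lambda>om. noise Hs bs H b eta w0 om t) \<in> borel_measurable Om"
proof -
  assume tT: "t \<le> T"
  note [measurable] = w_meas[OF le_SucI[OF tT]] Hs_t_meas[OF tT] bs_t_meas[OF tT]
  show ?thesis unfolding noise_def by measurable
qed

lemma HsI: "integrable D Hs"
proof -
  have "integrable D (\<lambda>x. norm (Hs x))"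
  proof (rule Bochner_Integration.integrable_bound)
    show "integrable D (\<lambda>x. 1 + (norm (Hs x))\<^sup>2)"
      by (rule Bochner_Integration.integrable_add[OF DP.integrable_const Hs2])
    show "(\<lambda>x. norm (Hs x)) \<in> borel_measurable D" using Hsm by measurable
    show "AE x in D. norm (norm (Hs x)) \<le> norm (1 + (norm (Hs x))\<^sup>2)"
      by (auto simp: power2_eq_square le_1_sq)
  qed
  then show ?thesis using integrable_norm_iff[OF Hsm] by simp
qed

lemma bsI: "integrable D bs"
proof -
  have "integrable D (\<lambda>x. norm (bs x))"
  proof (rule Bochner_Integration.integrable_bound)
    show "integrable D (\<lambda>x. 1 + (norm (bs x))\<^sup>2)"
      by (rule Bochner_Integration.integrable_add[OF DP.integrable_const bs2])
    show "(\<lambda>x. norm (bs x)) \<in> borel_measurable D" using bsm by measurable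
    show "AE x in D. norm (norm (bs x)) \<le> norm (1 + (norm (bs x))\<^sup>2)"
      by (auto simp: power2_eq_square le_1_sq)
  qed
  then show ?thesis using integrable_norm_iff[OF bsm] by simp
qed

lemma H_sym: "transpose H = H"
proof -
  have comp: "H $ i $ j = (\<integral>x. Hs x $ i $ j \<partial>D)" for i j
  proof -
    have bl: "bounded_linear (\<lambda>A::real^'n^'n. A $ i $ j)"
      using bounded_linear_compose[OF bounded_linear_vec_nth bounded_linear_vec_nth] .
    show ?thesis unfolding Hdef using integral_bounded_linear[OF bl HsI] by simp
  qed
  have "Hs x $ j $ i = Hs x $ i $ j" for x i j
    using arg_cong[OF Hsym[of x], of "\<lambda>A. A $ i $ j"] by (simp add: transpose_def)
  then show ?thesis by (simp add: vec_eq_iff transpose_def comp)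
qed

lemma H_wstar: "H *v wstar = b"
proof -
  have "\<forall>x. H *v x = 0 \<longrightarrow> x = 0"
    using Hpd by (metis inner_zero_right less_irrefl)
  then have "\<exists>B. B ** H = mat 1" using matrix_left_invertible_ker by blast
  then have "invertible H" using invertible_left_inverse by blast
  then have "\<exists>A'. H ** A' = mat 1 \<and> A' ** H = mat 1" unfolding invertible_def .
  then have "H ** matrix_inv H = mat 1"
    unfolding matrix_inv_def by (rule someI2_ex) auto
  then show ?thesis unfolding wdef by (simp add: matrix_vector_mul_assoc)
qed

end


lemma G_aux:
  fixes A P Q :: real
  assumes "0 \<le> A" "0 \<le> P" "0 \<le> Q"
  shows "1 \<le> (1+A)*(1+P+Q)" "A \<le> (1+A)*(1+P+Q)" "A*P \<le> (1+A)*(1+P+Q)" "Q \<le> (1+A)*(1+P+Q)"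
proof -
  have e: "(1+A)*(1+P+Q) = 1 + P + Q + A + A*P + A*Q" by (simp add: algebra_simps)
  have "0 \<le> A*P" "0 \<le> A*Q" using assms by simp_all
  note h = this assms
  show "1 \<le> (1+A)*(1+P+Q)" unfolding e using h by linarith
  show "A \<le> (1+A)*(1+P+Q)" unfolding e using h by linarith
  show "A*P \<le> (1+A)*(1+P+Q)" unfolding e using h by linarith
  show "Q \<le> (1+A)*(1+P+Q)" unfolding e using h by linarith
qed

lemma comb_aux:
  fixes X Y x A PA Q G :: real
  assumes "0 \<le> X" "0 \<le> Y" "x \<le> 4*(A + X*PA + Y*Q)" "1 \<le> G" "A \<le> G" "PA \<le> G" "Q \<le> G"
  shows "1 + x \<le> (5 + 4*X + 4*Y) * G"
proof -
  have "X*PA \<le> X*G" "Y*Q \<le> Y*G" using assms by (simp_all add: mult_left_mono)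
  then show ?thesis using assms by (simp add: algebra_simps)
qed

context sgd_setup begin

abbreviation "w om t \<equiv> sgd_iter Hs bs eta w0 om t"
abbreviation "nz om t \<equiv> noise Hs bs H b eta w0 om t"

definition "G t om = (1 + (norm (w om t))\<^sup>2) * (1 + (norm (Hs (om t)))\<^sup>2 + (norm (bs (om t)))\<^sup>2)"

lemma G_parts: "1 \<le> G t om" "(norm (w om t))\<^sup>2 \<le> G t om"
  "(norm (w om t))\<^sup>2 * (norm (Hs (om t)))\<^sup>2 \<le> G t om" "(norm (bs (om t)))\<^sup>2 \<le> G t om"
  unfolding G_def using G_aux[of "(norm (w om t))\<^sup>2" "(norm (Hs (om t)))\<^sup>2" "(norm (bs (om t)))\<^sup>2"]
  by simp_all

lemma G_meas: "t \<le> T \<Longrightarrow> G t \<in> borel_measurable Om"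
proof -
  assume tT: "t \<le> T"
  note [measurable] = w_meas[OF le_SucI[OF tT]] Hs_t_meas[OF tT] bs_t_meas[OF tT]
  show ?thesis unfolding G_def[abs_def] by measurable
qed


lemma w_step_bound:
  "1 + (norm (w om (Suc t)))\<^sup>2 \<le> (5 + 4*((eta t)\<^sup>2 * (real CARD('n) * real CARD('n))\<^sup>2) + 4*(eta t)\<^sup>2) * G t om"
proof -
  let ?a = "norm (w om t)" and ?p = "norm (Hs (om t))" and ?q = "norm (bs (om t))" and ?c = "\<bar>eta t\<bar>"
  have n1: "norm (Hs (om t) *v w om t - bs (om t)) \<le> (real CARD('n) * real CARD('n)) * ?p * ?a + ?q"
    using mv_norm[of "Hs (om t)" "w om t"] norm_triangle_ineq4[of "Hs (om t) *v w om t" "bs (om t)"]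
    by linarith
  have "norm (w om (Suc t)) \<le> ?a + norm (eta t *\<^sub>R (Hs (om t) *v w om t - bs (om t)))"
    using norm_triangle_ineq4[of "w om t" "eta t *\<^sub>R (Hs (om t) *v w om t - bs (om t))"] by simp
  also have "\<dots> = ?a + ?c * norm (Hs (om t) *v w om t - bs (om t))" by simp
  also have "\<dots> \<le> ?a + ?c * ((real CARD('n) * real CARD('n)) * ?p * ?a + ?q)"
    using n1 by (simp add: mult_left_mono)
  finally have "norm (w om (Suc t)) \<le> ?a + ?c * (real CARD('n) * real CARD('n)) * ?p * ?a + ?c * ?q + 0"
    by (simp add: algebra_simps)
  then have "(norm (w om (Suc t)))\<^sup>2 \<le> (?a + ?c * (real CARD('n) * real CARD('n)) * ?p * ?a + ?c * ?q + 0)\<^sup>2"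
    by (rule power_mono) simp
  also have "\<dots> \<le> 4 * (?a\<^sup>2 + (?c * (real CARD('n) * real CARD('n)) * ?p * ?a)\<^sup>2 + (?c * ?q)\<^sup>2 + 0\<^sup>2)" by (rule sq4)
  also have "\<dots> = 4 * (?a\<^sup>2 + ((eta t)\<^sup>2 * (real CARD('n) * real CARD('n))\<^sup>2) * (?a\<^sup>2 * ?p\<^sup>2) + (eta t)\<^sup>2 * ?q\<^sup>2)"
    unfolding power_mult_distrib power2_abs by (simp add: ac_simps)
  finally have x: "(norm (w om (Suc t)))\<^sup>2 \<le> 4 * (?a\<^sup>2 + ((eta t)\<^sup>2 * (real CARD('n) * real CARD('n))\<^sup>2) * (?a\<^sup>2 * ?p\<^sup>2) + (eta t)\<^sup>2 * ?q\<^sup>2)" .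
  show ?thesis
    by (rule comb_aux[OF _ _ x]) (simp_all add: G_parts)
qed

definition "Ce = 4 + 4 * (norm wstar)\<^sup>2"
definition "Cn = 4 * ((real CARD('n) * real CARD('n))\<^sup>2 * (norm H)\<^sup>2 + (norm b)\<^sup>2 + (real CARD('n) * real CARD('n))\<^sup>2 + 1)"

lemma e_bound: "(norm (w om t - wstar))\<^sup>2 \<le> Ce * G t om"
proof -
  have "norm (w om t - wstar) \<le> norm (w om t) + norm wstar + 0 + 0"
    using norm_triangle_ineq4 by simp
  then have "(norm (w om t - wstar))\<^sup>2 \<le> (norm (w om t) + norm wstar + 0 + 0)\<^sup>2"
    by (rule power_mono) simp
  also have "\<dots> \<le> 4 * ((norm (w om t))\<^sup>2 + (norm wstar)\<^sup>2 + 0\<^sup>2 + 0\<^sup>2)" by (rule sq4)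
  also have "\<dots> \<le> 4 * (G t om + (norm wstar)\<^sup>2 * G t om)"
    using G_parts(1,2)[where t=t and om=om] mult_left_mono[OF G_parts(1)[where t=t and om=om], of "(norm wstar)\<^sup>2"]
    by simp
  also have "\<dots> = Ce * G t om" by (simp add: Ce_def algebra_simps)
  finally show ?thesis .
qed

lemma n_bound: "(norm (nz om t))\<^sup>2 \<le> Cn * G t om"
proof -
  let ?a = "norm (w om t)" and ?p = "norm (Hs (om t))" and ?q = "norm (bs (om t))"
  have "norm (nz om t) \<le> norm (H *v w om t) + norm b + norm (Hs (om t) *v w om t) + ?q"
    unfolding noise_def
    using norm_triangle_ineq4[of "H *v w om t - b" "Hs (om t) *v w om t - bs (om t)"]
      norm_triangle_ineq4[of "H *v w om t" b] norm_triangle_ineq4[of "Hs (om t) *v w om t" "bs (om t)"]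
    by linarith
  also have "\<dots> \<le> (real CARD('n) * real CARD('n)) * norm H * ?a + norm b + (real CARD('n) * real CARD('n)) * ?p * ?a + ?q"
    using mv_norm[of H "w om t"] mv_norm[of "Hs (om t)" "w om t"] by linarith
  finally have "(norm (nz om t))\<^sup>2 \<le> ((real CARD('n) * real CARD('n)) * norm H * ?a + norm b + (real CARD('n) * real CARD('n)) * ?p * ?a + ?q)\<^sup>2"
    by (rule power_mono) simp
  also have "\<dots> \<le> 4 * (((real CARD('n) * real CARD('n)) * norm H * ?a)\<^sup>2 + (norm b)\<^sup>2 + ((real CARD('n) * real CARD('n)) * ?p * ?a)\<^sup>2 + ?q\<^sup>2)" by (rule sq4)
  also have "\<dots> = 4 * (((real CARD('n) * real CARD('n))\<^sup>2 * (norm H)\<^sup>2) * ?a\<^sup>2 + (norm b)\<^sup>2 + (real CARD('n) * real CARD('n))\<^sup>2 * (?a\<^sup>2 * ?p\<^sup>2) + ?q\<^sup>2)"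
    unfolding power_mult_distrib by (simp add: ac_simps)
  also have "\<dots> \<le> 4 * (((real CARD('n) * real CARD('n))\<^sup>2 * (norm H)\<^sup>2) * G t om + (norm b)\<^sup>2 * G t om + (real CARD('n) * real CARD('n))\<^sup>2 * G t om + G t om)"
  proof -
    have f1: "((real CARD('n) * real CARD('n))\<^sup>2 * (norm H)\<^sup>2) * ?a\<^sup>2 \<le> ((real CARD('n) * real CARD('n))\<^sup>2 * (norm H)\<^sup>2) * G t om"
      by (rule mult_left_mono) (simp_all add: G_parts)
    have f2: "(norm b)\<^sup>2 \<le> (norm b)\<^sup>2 * G t om"
      using mult_left_mono[OF G_parts(1)[where t=t and om=om], of "(norm b)\<^sup>2"] by simp
    have f3: "(real CARD('n) * real CARD('n))\<^sup>2 * (?a\<^sup>2 * ?p\<^sup>2) \<le> (real CARD('n) * real CARD('n))\<^sup>2 * G t om"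
      by (rule mult_left_mono) (simp_all add: G_parts)
    have f4: "?q\<^sup>2 \<le> G t om" by (simp add: G_parts)
    show ?thesis using add_mono[OF add_mono[OF add_mono[OF f1 f2] f3] f4] by simp
  qed
  also have "\<dots> = Cn * G t om" by (simp add: Cn_def algebra_simps)
  finally show ?thesis .
qed

end


context sgd_setup begin

lemma nn_split:
  fixes h :: "(nat \<Rightarrow> 's) \<Rightarrow> ennreal" and k :: "'s \<Rightarrow> ennreal"
  assumes t: "t \<le> T" and hm: "h \<in> borel_measurable Om"
    and hi: "\<And>om y. h (om(t := y)) = h om" and km: "k \<in> borel_measurable D"
  shows "(\<integral>\<^sup>+om. h om * k (om t) \<partial>Om) = (\<integral>\<^sup>+om. h om \<partial>Om) * (\<integral>\<^sup>+y. k y \<partial>D)"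
proof -
  define I' where "I' = {0..T} - {t}"
  have eqI: "{0..T} = insert t I'" and fI: "finite I'" and tI: "t \<notin> I'"
    using t by (auto simp: I'_def)
  have hm': "h \<in> borel_measurable (PiM (insert t I') (\<lambda>_. D))" using hm unfolding eqI .
  have cm': "(\<lambda>om. om t) \<in> PiM (insert t I') (\<lambda>_. D) \<rightarrow>\<^sub>M D"
    by (rule measurable_component_singleton) simp
  have hkm: "(\<lambda>om. h om * k (om t)) \<in> borel_measurable (PiM (insert t I') (\<lambda>_. D))"
    using hm' measurable_compose[OF cm' km] by measurable
  have "(\<integral>\<^sup>+om. h om * k (om t) \<partial>Om) = (\<integral>\<^sup>+x. (\<integral>\<^sup>+y. h (x(t:=y)) * k ((x(t:=y)) t) \<partial>D) \<partial>PiM I' (\<lambda>_. D))"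
    unfolding eqI by (rule P.product_nn_integral_insert[OF fI tI hkm])
  also have "\<dots> = (\<integral>\<^sup>+x. h x * (\<integral>\<^sup>+y. k y \<partial>D) \<partial>PiM I' (\<lambda>_. D))"
    by (simp add: hi nn_integral_cmult[OF km])
  also have "\<dots> = (\<integral>\<^sup>+x. h x \<partial>PiM I' (\<lambda>_. D)) * (\<integral>\<^sup>+y. k y \<partial>D)"
  proof (rule nn_integral_multc)
    obtain y0 where y0: "y0 \<in> space D" using DP.not_empty by blast
    have upd: "(\<lambda>x. x(t := y0)) \<in> PiM I' (\<lambda>_. D) \<rightarrow>\<^sub>M PiM (insert t I') (\<lambda>_. D)"
      by (rule measurable_fun_upd[where J=I']) (auto intro: measurable_const y0)
    have "(\<lambda>x. h (x(t := y0))) \<in> borel_measurable (PiM I' (\<lambda>_. D))"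
      by (rule measurable_compose[OF upd hm'])
    then show "h \<in> borel_measurable (PiM I' (\<lambda>_. D))" by (simp add: hi)
  qed
  finally have A: "(\<integral>\<^sup>+om. h om * k (om t) \<partial>Om) = (\<integral>\<^sup>+x. h x \<partial>PiM I' (\<lambda>_. D)) * (\<integral>\<^sup>+y. k y \<partial>D)" .
  have "(\<integral>\<^sup>+om. h om \<partial>Om) = (\<integral>\<^sup>+x. (\<integral>\<^sup>+y. h (x(t:=y)) \<partial>D) \<partial>PiM I' (\<lambda>_. D))"
    unfolding eqI by (rule P.product_nn_integral_insert[OF fI tI hm'])
  also have "\<dots> = (\<integral>\<^sup>+x. h x \<partial>PiM I' (\<lambda>_. D))"
    by (simp add: hi DP.emeasure_space_1)
  finally have B: "(\<integral>\<^sup>+om. h om \<partial>Om) = (\<integral>\<^sup>+x. h x \<partial>PiM I' (\<lambda>_. D))" .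
  show ?thesis using A B by simp
qed

lemma Gnn: "0 \<le> G t om"
  using G_parts(1)[where t=t and om=om] by linarith

lemma Dint_fin: "(\<integral>\<^sup>+y. ennreal (1 + (norm (Hs y))\<^sup>2 + (norm (bs y))\<^sup>2) \<partial>D) < \<infinity>"
proof -
  have "integrable D (\<lambda>y. 1 + (norm (Hs y))\<^sup>2 + (norm (bs y))\<^sup>2)"
    by (intro Bochner_Integration.integrable_add DP.integrable_const Hs2 bs2)
  then have "(\<integral>\<^sup>+y. ennreal (norm (1 + (norm (Hs y))\<^sup>2 + (norm (bs y))\<^sup>2)) \<partial>D) < \<infinity>"
    unfolding integrable_iff_bounded by blast
  moreover have "(\<integral>\<^sup>+y. ennreal (norm (1 + (norm (Hs y))\<^sup>2 + (norm (bs y))\<^sup>2)) \<partial>D)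
      = (\<integral>\<^sup>+y. ennreal (1 + (norm (Hs y))\<^sup>2 + (norm (bs y))\<^sup>2) \<partial>D)"
    by (rule nn_integral_cong) (simp add: add_nonneg_nonneg)
  ultimately show ?thesis by simp
qed

lemma G_int_of:
  assumes t: "t \<le> T" and W: "(\<integral>\<^sup>+om. ennreal (1 + (norm (w om t))\<^sup>2) \<partial>Om) < \<infinity>"
  shows "integrable Om (G t)"
proof -
  have hm: "(\<lambda>om. ennreal (1 + (norm (w om t))\<^sup>2)) \<in> borel_measurable Om"
    using w_meas[OF le_SucI[OF t]] by measurable
  have km: "(\<lambda>y. ennreal (1 + (norm (Hs y))\<^sup>2 + (norm (bs y))\<^sup>2)) \<in> borel_measurable D"
    using Hsm bsm by measurable
  have "(\<integral>\<^sup>+om. ennreal (norm (G t om)) \<partial>Om) = (\<integral>\<^sup>+om. ennreal (1 + (norm (w om t))\<^sup>2) * ennreal (1 + (norm (Hs (om t)))\<^sup>2 + (norm (bs (om t)))\<^sup>2) \<partial>Om)"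
    by (rule nn_integral_cong) (simp add: G_def ennreal_mult add_nonneg_nonneg)
  also have "\<dots> = (\<integral>\<^sup>+om. ennreal (1 + (norm (w om t))\<^sup>2) \<partial>Om) * (\<integral>\<^sup>+y. ennreal (1 + (norm (Hs y))\<^sup>2 + (norm (bs y))\<^sup>2) \<partial>D)"
    by (rule nn_split[OF t hm _ km]) (simp add: sgd_upd)
  also have "\<dots> < \<infinity>" using W Dint_fin by (simp add: ennreal_mult_less_top)
  finally show ?thesis using G_meas[OF t] by (simp add: integrable_iff_bounded)
qed

lemma W_fin: "t \<le> Suc T \<Longrightarrow> (\<integral>\<^sup>+om. ennreal (1 + (norm (w om t))\<^sup>2) \<partial>Om) < \<infinity>"
proof (induction t)
  case 0
  have "(\<integral>\<^sup>+om. ennreal (1 + (norm (w om 0))\<^sup>2) \<partial>Om) = ennreal (1 + (norm w0)\<^sup>2)"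
    using prob_space.emeasure_space_1[OF Om_prob] by (simp add: nn_integral_const)
  then show ?case by simp
next
  case (Suc t)
  then have t: "t \<le> T" by simp
  have Gi: "integrable Om (G t)"
    by (rule G_int_of[OF t Suc.IH]) (use Suc.prems in simp)
  define C where "C = 5 + 4*((eta t)\<^sup>2 * (real CARD('n) * real CARD('n))\<^sup>2) + 4*(eta t)\<^sup>2"
  have C0: "0 \<le> C" unfolding C_def by (intro add_nonneg_nonneg mult_nonneg_nonneg) auto
  have Gm: "(\<lambda>om. ennreal (G t om)) \<in> borel_measurable Om" using G_meas[OF t] by measurable
  have "(\<integral>\<^sup>+om. ennreal (1 + (norm (w om (Suc t)))\<^sup>2) \<partial>Om) \<le> (\<integral>\<^sup>+om. ennreal (C * G t om) \<partial>Om)"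
    by (rule nn_integral_mono, rule ennreal_leI) (unfold C_def, rule w_step_bound)
  also have "\<dots> = (\<integral>\<^sup>+om. ennreal C * ennreal (G t om) \<partial>Om)"
    by (rule nn_integral_cong) (simp add: ennreal_mult C0 Gnn)
  also have "\<dots> = ennreal C * (\<integral>\<^sup>+om. ennreal (G t om) \<partial>Om)"
    by (rule nn_integral_cmult[OF Gm])
  also have "\<dots> < \<infinity>"
  proof -
    have "(\<integral>\<^sup>+om. ennreal (norm (G t om)) \<partial>Om) < \<infinity>" using Gi unfolding integrable_iff_bounded by blast
    moreover have "(\<integral>\<^sup>+om. ennreal (norm (G t om)) \<partial>Om) = (\<integral>\<^sup>+om. ennreal (G t om) \<partial>Om)"
      by (rule nn_integral_cong) (simp add: Gnn)
    ultimately show ?thesis by (simp add: ennreal_mult_less_top)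
  qed
  finally show ?case .
qed

lemma G_int: "t \<le> T \<Longrightarrow> integrable Om (G t)"
  using G_int_of W_fin by simp

lemma int_by_G:
  assumes t: "t \<le> T" and fm: "f \<in> borel_measurable Om" and fb: "\<And>om. \<bar>f om\<bar> \<le> C * G t om"
  shows "integrable Om f"
proof (rule Bochner_Integration.integrable_bound[of Om "\<lambda>om. C * G t om" f])
  show "integrable Om (\<lambda>om. C * G t om)" using G_int[OF t] by simp
  show "f \<in> borel_measurable Om" by (rule fm)
  show "AE om in Om. norm (f om) \<le> norm (C * G t om)"
    using fb by (auto intro: order_trans[OF _ abs_ge_self])
qed

lemma int_quad:
  fixes x y :: "(nat \<Rightarrow> 's) \<Rightarrow> real^'n" and M :: "real^'n^'n"
  assumes t: "t \<le> T" and xm: "x \<in> borel_measurable Om" and ym: "y \<in> borel_measurable Om"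
    and xb: "\<And>om. (norm (x om))\<^sup>2 \<le> Cx * G t om" and yb: "\<And>om. (norm (y om))\<^sup>2 \<le> Cy * G t om"
  shows "integrable Om (\<lambda>om. x om \<bullet> (M *v y om))"
proof (rule int_by_G[OF t, where C = "real CARD('n) * real CARD('n) * norm M * (Cx + Cy)"])
  show "(\<lambda>om. x om \<bullet> (M *v y om)) \<in> borel_measurable Om"
    using xm ym by (intro borel_measurable_inner mv_meas) auto
  fix om
  have "\<bar>x om \<bullet> (M *v y om)\<bar> \<le> real CARD('n) * real CARD('n) * norm M * ((norm (x om))\<^sup>2 + (norm (y om))\<^sup>2)"
    by (rule quad_bound)
  also have "\<dots> \<le> real CARD('n) * real CARD('n) * norm M * (Cx * G t om + Cy * G t om)"
    by (rule mult_left_mono) (use xb[of om] yb[of om] in auto)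
  also have "\<dots> = real CARD('n) * real CARD('n) * norm M * (Cx + Cy) * G t om"
    by (simp add: algebra_simps)
  finally show "\<bar>x om \<bullet> (M *v y om)\<bar> \<le> real CARD('n) * real CARD('n) * norm M * (Cx + Cy) * G t om" .
qed

lemma e_meas: "t \<le> T \<Longrightarrow> (\<lambda>om. w om t - wstar) \<in> borel_measurable Om"
proof -
  assume t: "t \<le> T"
  show ?thesis by (rule borel_measurable_diff[OF w_meas[OF le_SucI[OF t]] borel_measurable_const])
qed


end


context sgd_setup begin

lemma cross:
  fixes M :: "real^'n^'n"
  assumes t: "t \<le> T"
  shows "(\<integral>om. nz om t \<bullet> (M *v (w om t - wstar)) \<partial>Om) = 0"
proof -
  define I' where "I' = {0..T} - {t}"
  have eqI: "{0..T} = insert t I'" and fI: "finite I'" and tI: "t \<notin> I'"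
    using t by (auto simp: I'_def)
  have int: "integrable Om (\<lambda>om. nz om t \<bullet> (M *v (w om t - wstar)))"
    by (rule int_quad[OF t nz_meas[OF t] e_meas[OF t] n_bound e_bound])
  have int': "integrable (PiM (insert t I') (\<lambda>_. D)) (\<lambda>om. nz om t \<bullet> (M *v (w om t - wstar)))"
    using int unfolding eqI .
  have "(\<integral>om. nz om t \<bullet> (M *v (w om t - wstar)) \<partial>Om) =
      (\<integral>x. (\<integral>y. nz (x(t:=y)) t \<bullet> (M *v (w (x(t:=y)) t - wstar)) \<partial>D) \<partial>PiM I' (\<lambda>_. D))"
    unfolding eqI by (rule P.product_integral_insert[OF fI tI int'])
  also have "\<dots> = (\<integral>x. 0 \<partial>PiM I' (\<lambda>_. D))"
  proof (rule Bochner_Integration.integral_cong[OF refl])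
    fix x :: "nat \<Rightarrow> 's"
    define v where "v = w x t"
    define c where "c = M *v (w x t - wstar)"
    have bl: "bounded_linear (\<lambda>A::real^'n^'n. A *v v)"
      by (rule bounded_bilinear.bounded_linear_left[OF mv_bbil])
    have i1: "integrable D (\<lambda>y. Hs y *v v)"
      using integrable_bounded_linear[OF bl HsI] .
    have e1: "(\<integral>y. Hs y *v v \<partial>D) = H *v v"
      using integral_bounded_linear[OF bl HsI] Hdef by simp
    have i2: "integrable D (\<lambda>y. Hs y *v v - bs y)"
      by (rule Bochner_Integration.integrable_diff[OF i1 bsI])
    have ig: "integrable D (\<lambda>y. (H *v v - b) - (Hs y *v v - bs y))"
      by (rule Bochner_Integration.integrable_diff[OF DP.integrable_const i2])
    have z: "(\<integral>y. (H *v v - b) - (Hs y *v v - bs y) \<partial>D) = 0"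
    proof -
      have "(\<integral>y. (H *v v - b) - (Hs y *v v - bs y) \<partial>D) = (\<integral>y. (H *v v - b) \<partial>D) - (\<integral>y. (Hs y *v v - bs y) \<partial>D)"
        by (rule Bochner_Integration.integral_diff[OF DP.integrable_const i2])
      also have "(\<integral>y. (Hs y *v v - bs y) \<partial>D) = (\<integral>y. Hs y *v v \<partial>D) - (\<integral>y. bs y \<partial>D)"
        by (rule Bochner_Integration.integral_diff[OF i1 bsI])
      finally show ?thesis using e1 bdef by (simp add: DP.prob_space)
    qed
    have "(\<integral>y. nz (x(t:=y)) t \<bullet> (M *v (w (x(t:=y)) t - wstar)) \<partial>D) =
        (\<integral>y. c \<bullet> ((H *v v - b) - (Hs y *v v - bs y)) \<partial>D)"
      by (simp add: noise_def sgd_upd inner_commute c_def v_def)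
    also have "\<dots> = c \<bullet> (\<integral>y. (H *v v - b) - (Hs y *v v - bs y) \<partial>D)"
      by (rule integral_inner_right) (rule ig)
    also have "\<dots> = 0" by (simp add: z)
    finally show "(\<integral>y. nz (x(t:=y)) t \<bullet> (M *v (w (x(t:=y)) t - wstar)) \<partial>D) = 0" .
  qed
  also have "\<dots> = 0" by simp
  finally show ?thesis .
qed

lemma step:
  fixes A :: "real^'n^'n"
  assumes t: "t \<le> T"
  shows "(\<integral>om. (w om (Suc t) - wstar) \<bullet> (A *v (w om (Suc t) - wstar)) \<partial>Om) =
     (\<integral>om. (w om t - wstar) \<bullet> ((transpose (Pmat H eta t) ** A ** Pmat H eta t) *v (w om t - wstar)) \<partial>Om)
     + (\<integral>om. (eta t)\<^sup>2 * (nz om t \<bullet> (A *v nz om t)) \<partial>Om)"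
proof -
  define P where "P = Pmat H eta t"
  define f1 where "f1 = (\<lambda>om. (w om t - wstar) \<bullet> ((transpose P ** A ** P) *v (w om t - wstar)))"
  define f2 where "f2 = (\<lambda>om. nz om t \<bullet> ((transpose A ** P) *v (w om t - wstar)))"
  define f3 where "f3 = (\<lambda>om. nz om t \<bullet> ((A ** P) *v (w om t - wstar)))"
  define g where "g = (\<lambda>om. (eta t)\<^sup>2 * (nz om t \<bullet> (A *v nz om t)))"
  have ptw: "(w om (Suc t) - wstar) \<bullet> (A *v (w om (Suc t) - wstar)) =
      f1 om + eta t * f2 om + eta t * f3 om + g om" for om
  proof -
    define e where "e = w om t - wstar"
    define n where "n = nz om t"
    have e': "w om (Suc t) - wstar = P *v e + eta t *\<^sub>R n"
      using H_wstar
      by (simp add: P_def e_def n_def Pmv noise_def matrix_vector_mult_diff_distrib algebra_simps)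
    have p1: "(P *v e) \<bullet> (A *v (P *v e)) = e \<bullet> ((transpose P ** A ** P) *v e)"
      by (simp add: tr_inner matrix_vector_mul_assoc matrix_mul_assoc)
    have p2: "(P *v e) \<bullet> (A *v n) = n \<bullet> ((transpose A ** P) *v e)"
    proof -
      have "(P *v e) \<bullet> (A *v n) = (A *v n) \<bullet> (P *v e)" by (rule inner_commute)
      also have "\<dots> = n \<bullet> (transpose A *v (P *v e))" by (rule tr_inner)
      also have "\<dots> = n \<bullet> ((transpose A ** P) *v e)" by (simp add: matrix_vector_mul_assoc)
      finally show ?thesis .
    qed
    have p3: "n \<bullet> (A *v (P *v e)) = n \<bullet> ((A ** P) *v e)" by (simp add: matrix_vector_mul_assoc)
    have "(w om (Suc t) - wstar) \<bullet> (A *v (w om (Suc t) - wstar)) =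
        (P *v e) \<bullet> (A *v (P *v e)) + eta t * ((P *v e) \<bullet> (A *v n)) + eta t * (n \<bullet> (A *v (P *v e)))
        + (eta t)\<^sup>2 * (n \<bullet> (A *v n))"
      unfolding e' by (simp add: inner_add_left inner_add_right matrix_vector_right_distrib
          matrix_vector_mult_scaleR power2_eq_square algebra_simps)
    also have "\<dots> = f1 om + eta t * f2 om + eta t * f3 om + g om"
      unfolding p1 p2 p3 by (simp add: f1_def f2_def f3_def g_def e_def n_def)
    finally show ?thesis .
  qed
  have i1: "integrable Om f1" unfolding f1_def
    by (rule int_quad[OF t e_meas[OF t] e_meas[OF t] e_bound e_bound])
  have i2: "integrable Om f2" unfolding f2_def
    by (rule int_quad[OF t nz_meas[OF t] e_meas[OF t] n_bound e_bound])
  have i3: "integrable Om f3" unfolding f3_def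
    by (rule int_quad[OF t nz_meas[OF t] e_meas[OF t] n_bound e_bound])
  have i4: "integrable Om g" unfolding g_def
    by (rule integrable_mult_right) (rule int_quad[OF t nz_meas[OF t] nz_meas[OF t] n_bound n_bound])
  have z2: "integral\<^sup>L Om f2 = 0" unfolding f2_def by (rule cross[OF t])
  have z3: "integral\<^sup>L Om f3 = 0" unfolding f3_def by (rule cross[OF t])
  have "(\<integral>om. (w om (Suc t) - wstar) \<bullet> (A *v (w om (Suc t) - wstar)) \<partial>Om) =
      (\<integral>om. f1 om + eta t * f2 om + eta t * f3 om + g om \<partial>Om)"
    by (rule Bochner_Integration.integral_cong[OF refl]) (rule ptw)
  also have "\<dots> = integral\<^sup>L Om f1 + eta t * integral\<^sup>L Om f2 + eta t * integral\<^sup>L Om f3 + integral\<^sup>L Om g"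
    using i1 i2 i3 i4 by simp
  also have "\<dots> = integral\<^sup>L Om f1 + integral\<^sup>L Om g" by (simp add: z2 z3)
  finally show ?thesis by (simp add: f1_def g_def P_def)
qed

lemma Pprod_split: "\<tau> < s \<Longrightarrow> Pprod H eta (Suc \<tau>) (s - \<tau>) = Pmat H eta s ** Pprod H eta (Suc \<tau>) (s - Suc \<tau>)"
proof -
  assume a: "\<tau> < s"
  then have "s - \<tau> = Suc (s - Suc \<tau>)" by simp
  moreover have "Suc \<tau> + (s - Suc \<tau>) = s" using a by simp
  ultimately show ?thesis by simp
qed

lemma main:
  fixes A :: "real^'n^'n"
  shows "s \<le> Suc T \<Longrightarrow> (\<integral>om. (w om s - wstar) \<bullet> (A *v (w om s - wstar)) \<partial>Om) =
     (\<integral>om. (w0 - wstar) \<bullet> ((transpose (Pprod H eta 0 s) ** A ** Pprod H eta 0 s) *v (w0 - wstar)) \<partial>Om)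
     + (\<Sum>\<tau><s. \<integral>om. (eta \<tau>)\<^sup>2 * (nz om \<tau> \<bullet> ((transpose (Pprod H eta (Suc \<tau>) (s - Suc \<tau>)) ** A ** Pprod H eta (Suc \<tau>) (s - Suc \<tau>)) *v nz om \<tau>)) \<partial>Om)"
proof (induction s arbitrary: A)
  case 0
  then show ?case by simp
next
  case (Suc s)
  then have sT: "s \<le> T" by simp
  let ?P = "Pmat H eta s"
  note IH = Suc.IH[of "transpose ?P ** A ** ?P"]
  have eqX: "(\<integral>om. (w om s - wstar) \<bullet> ((transpose ?P ** A ** ?P) *v (w om s - wstar)) \<partial>Om) =
     (\<integral>om. (w0 - wstar) \<bullet> ((transpose (Pprod H eta 0 (Suc s)) ** A ** Pprod H eta 0 (Suc s)) *v (w0 - wstar)) \<partial>Om)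
     + (\<Sum>\<tau><s. \<integral>om. (eta \<tau>)\<^sup>2 * (nz om \<tau> \<bullet> ((transpose (Pprod H eta (Suc \<tau>) (Suc s - Suc \<tau>)) ** A ** Pprod H eta (Suc \<tau>) (Suc s - Suc \<tau>)) *v nz om \<tau>)) \<partial>Om)"
  proof -
    have m0: "transpose (Pprod H eta 0 s) ** (transpose ?P ** A ** ?P) ** Pprod H eta 0 s
        = transpose (Pprod H eta 0 (Suc s)) ** A ** Pprod H eta 0 (Suc s)"
      by (simp add: matrix_transpose_mul matrix_mul_assoc)
    have mt: "transpose (Pprod H eta (Suc \<tau>) (s - Suc \<tau>)) ** (transpose ?P ** A ** ?P) ** Pprod H eta (Suc \<tau>) (s - Suc \<tau>)
        = transpose (Pprod H eta (Suc \<tau>) (Suc s - Suc \<tau>)) ** A ** Pprod H eta (Suc \<tau>) (Suc s - Suc \<tau>)"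
      if "\<tau> < s" for \<tau>
      using that by (simp add: Pprod_split matrix_transpose_mul matrix_mul_assoc)
    have sumeq: "(\<Sum>\<tau><s. \<integral>om. (eta \<tau>)\<^sup>2 * (nz om \<tau> \<bullet> ((transpose (Pprod H eta (Suc \<tau>) (s - Suc \<tau>)) ** (transpose ?P ** A ** ?P) ** Pprod H eta (Suc \<tau>) (s - Suc \<tau>)) *v nz om \<tau>)) \<partial>Om)
       = (\<Sum>\<tau><s. \<integral>om. (eta \<tau>)\<^sup>2 * (nz om \<tau> \<bullet> ((transpose (Pprod H eta (Suc \<tau>) (Suc s - Suc \<tau>)) ** A ** Pprod H eta (Suc \<tau>) (Suc s - Suc \<tau>)) *v nz om \<tau>)) \<partial>Om)"
    proof (rule sum.cong[OF refl])
      fix \<tau> assume "\<tau> \<in> {..<s}"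
      then have "\<tau> < s" by simp
      then show "(\<integral>om. (eta \<tau>)\<^sup>2 * (nz om \<tau> \<bullet> ((transpose (Pprod H eta (Suc \<tau>) (s - Suc \<tau>)) ** (transpose ?P ** A ** ?P) ** Pprod H eta (Suc \<tau>) (s - Suc \<tau>)) *v nz om \<tau>)) \<partial>Om)
       = (\<integral>om. (eta \<tau>)\<^sup>2 * (nz om \<tau> \<bullet> ((transpose (Pprod H eta (Suc \<tau>) (Suc s - Suc \<tau>)) ** A ** Pprod H eta (Suc \<tau>) (Suc s - Suc \<tau>)) *v nz om \<tau>)) \<partial>Om)"
        by (simp only: mt)
    qed
    show ?thesis
      unfolding IH[OF le_SucI[OF sT]] m0 sumeq ..

  qed
  have "(\<integral>om. (w om (Suc s) - wstar) \<bullet> (A *v (w om (Suc s) - wstar)) \<partial>Om) =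
     (\<integral>om. (w om s - wstar) \<bullet> ((transpose ?P ** A ** ?P) *v (w om s - wstar)) \<partial>Om)
     + (\<integral>om. (eta s)\<^sup>2 * (nz om s \<bullet> (A *v nz om s)) \<partial>Om)"
    by (rule step[OF sT])
  also have "\<dots> = (\<integral>om. (w0 - wstar) \<bullet> ((transpose (Pprod H eta 0 (Suc s)) ** A ** Pprod H eta 0 (Suc s)) *v (w0 - wstar)) \<partial>Om)
     + (\<Sum>\<tau><s. \<integral>om. (eta \<tau>)\<^sup>2 * (nz om \<tau> \<bullet> ((transpose (Pprod H eta (Suc \<tau>) (Suc s - Suc \<tau>)) ** A ** Pprod H eta (Suc \<tau>) (Suc s - Suc \<tau>)) *v nz om \<tau>)) \<partial>Om)
     + (\<integral>om. (eta s)\<^sup>2 * (nz om s \<bullet> (A *v nz om s)) \<partial>Om)"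
    by (simp only: eqX)
  finally show ?case by (simp add: add.assoc)
qed

end


theorem lemma4:
  fixes D :: "'s measure"
    and Hs :: "'s \<Rightarrow> real^'n^'n" and bs :: "'s \<Rightarrow> real^'n"
    and H :: "real^'n^'n" and b :: "real^'n" and wstar :: "real^'n"
    and eta :: "nat \<Rightarrow> real" and w0 :: "real^'n" and T :: nat
  assumes "prob_space D"
    and "Hs \<in> borel_measurable D" and "bs \<in> borel_measurable D"
    and "integrable D (\<lambda>x. (norm (Hs x))\<^sup>2)"
    and "integrable D (\<lambda>x. (norm (bs x))\<^sup>2)"
    and "\<And>x. transpose (Hs x) = Hs x"
    and "H = (\<integral>x. Hs x \<partial>D)" and "b = (\<integral>x. bs x \<partial>D)"
    and "\<And>v. v \<noteq> 0 \<Longrightarrow> v \<bullet> (H *v v) > 0"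
    and "wstar = matrix_inv H *v b"
  shows
   "(\<integral>\<omega>. (sgd_iter Hs bs eta w0 \<omega> (Suc T) - wstar) \<bullet>
          (H *v (sgd_iter Hs bs eta w0 \<omega> (Suc T) - wstar)) \<partial>(PiM {0..T} (\<lambda>_. D)))
    = (\<integral>\<omega>. (w0 - wstar) \<bullet>
          ((Pprod H eta 0 (Suc T) ** H ** Pprod_rev H eta 0 (Suc T)) *v (w0 - wstar))
          \<partial>(PiM {0..T} (\<lambda>_. D)))
      + (\<Sum>\<tau> = 0..T. \<integral>\<omega>. (eta \<tau>)\<^sup>2 * (noise Hs bs H b eta w0 \<omega> \<tau> \<bullet>
          ((Pprod H eta (Suc \<tau>) (T - \<tau>) ** H ** Pprod_rev H eta (Suc \<tau>) (T - \<tau>))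
             *v noise Hs bs H b eta w0 \<omega> \<tau>)) \<partial>(PiM {0..T} (\<lambda>_. D)))"

proof -
  interpret sgd_setup D Hs bs H b wstar eta w0 T
    by (rule sgd_setup.intro[OF assms])
  have m: "(\<integral>\<omega>. (sgd_iter Hs bs eta w0 \<omega> (Suc T) - wstar) \<bullet> (H *v (sgd_iter Hs bs eta w0 \<omega> (Suc T) - wstar)) \<partial>(PiM {0..T} (\<lambda>_. D))) =
     (\<integral>om. (w0 - wstar) \<bullet> ((transpose (Pprod H eta 0 (Suc T)) ** H ** Pprod H eta 0 (Suc T)) *v (w0 - wstar)) \<partial>(PiM {0..T} (\<lambda>_. D)))
     + (\<Sum>\<tau><Suc T. \<integral>om. (eta \<tau>)\<^sup>2 * (noise Hs bs H b eta w0 om \<tau> \<bullet> ((transpose (Pprod H eta (Suc \<tau>) (Suc T - Suc \<tau>)) ** H ** Pprod H eta (Suc \<tau>) (Suc T - Suc \<tau>)) *v noise Hs bs H b eta w0 om \<tau>)) \<partial>(PiM {0..T} (\<lambda>_. D)))"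
    by (rule main) simp
  have tr: "transpose (Pprod H eta a n) = Pprod H eta a n" for a n
    using Pprod_tr[OF H_sym] Pprod_rev_eq by simp
  show ?thesis
    unfolding m tr Pprod_rev_eq by (simp add: atLeast0AtMost lessThan_Suc_atMost)
qed


end
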